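(* Let $c \geq 5$ be an integer, let $G$ be a graph, and let $v$ be a vertex of $G$ having a neighbor of degree $2$. Let $Y=\{v\}\cup N_{G,1}(v)\cup N_{G,2}(v)$. If $G$ has no PCF $c$-coloring, but $(G,Y)$ has a semi-PCF $c$-coloring, then $2d(v) - 2n_1(v) - n_2(v) \geq c$.
   Context: $N_{G,d}(v)$ is the set of neighbors of $v$ of degree exactly $d$ in $G$, and $n_d(v)=|N_{G,d}(v)|$; $d(v)$ is the degree of $v$ in $G$. A PCF $c$-coloring of a graph is a proper coloring with at most $c$ colors in which every non-isolated vertex has a color appearing exactly once in its open neighborhood. For $Y\subseteq V(G)$, let $Z$ be the set of vertices of $G-Y$ having degree exactly $2$ in $G-Y$. A semi-PCF $c$-coloring of $(G,Y)$ is a proper $c$-coloring $\phi$ of $G-Y$ such that every vertex of $V(G-Y)\setminus (N_G(Y)\cap Z)$ has a color appearing exactly once (under $\phi$) among its neighbors in $G-Y$. *)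

theory Defs
  imports Main
begin

definition simple_graph :: "'a set \<Rightarrow> ('a \<Rightarrow> 'a \<Rightarrow> bool) \<Rightarrow> bool" where
  "simple_graph V E \<longleftrightarrow> finite V \<and> (\<forall>u w. E u w \<longrightarrow> u \<in> V \<and> w \<in> V)
     \<and> (\<forall>u w. E u w \<longrightarrow> E w u) \<and> (\<forall>u. \<not> E u u)"

definition nbrs :: "'a set \<Rightarrow> ('a \<Rightarrow> 'a \<Rightarrow> bool) \<Rightarrow> 'a \<Rightarrow> 'a set" where
  "nbrs V E v = {u \<in> V. E v u}"

definition deg :: "'a set \<Rightarrow> ('a \<Rightarrow> 'a \<Rightarrow> bool) \<Rightarrow> 'a \<Rightarrow> nat" where
  "deg V E v = card (nbrs V E v)"

definition nbrs_deg :: "'a set \<Rightarrow> ('a \<Rightarrow> 'a \<Rightarrow> bool) \<Rightarrow> nat \<Rightarrow> 'a \<Rightarrow> 'a set" where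
  "nbrs_deg V E d v = {u \<in> nbrs V E v. deg V E u = d}"

definition set_nbrs :: "'a set \<Rightarrow> ('a \<Rightarrow> 'a \<Rightarrow> bool) \<Rightarrow> 'a set \<Rightarrow> 'a set" where
  "set_nbrs V E Y = (\<Union>y\<in>Y. nbrs V E y)"

definition del_verts_V :: "'a set \<Rightarrow> 'a set \<Rightarrow> 'a set" where
  "del_verts_V V Y = V - Y"

definition del_verts_E :: "('a \<Rightarrow> 'a \<Rightarrow> bool) \<Rightarrow> 'a set \<Rightarrow> 'a \<Rightarrow> 'a \<Rightarrow> bool" where
  "del_verts_E E Y = (\<lambda>u w. E u w \<and> u \<notin> Y \<and> w \<notin> Y)"

definition proper_coloring :: "'a set \<Rightarrow> ('a \<Rightarrow> 'a \<Rightarrow> bool) \<Rightarrow> nat \<Rightarrow> ('a \<Rightarrow> nat) \<Rightarrow> bool" where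
  "proper_coloring V E c \<phi> \<longleftrightarrow> (\<forall>v\<in>V. \<phi> v < c)
     \<and> (\<forall>u\<in>V. \<forall>w\<in>V. E u w \<longrightarrow> \<phi> u \<noteq> \<phi> w)"

definition has_unique_color :: "('a \<Rightarrow> nat) \<Rightarrow> 'a set \<Rightarrow> bool" where
  "has_unique_color \<phi> S \<longleftrightarrow> (\<exists>col. card {u \<in> S. \<phi> u = col} = 1)"

definition pcf_coloring :: "'a set \<Rightarrow> ('a \<Rightarrow> 'a \<Rightarrow> bool) \<Rightarrow> nat \<Rightarrow> ('a \<Rightarrow> nat) \<Rightarrow> bool" where
  "pcf_coloring V E c \<phi> \<longleftrightarrow> proper_coloring V E c \<phi>
     \<and> (\<forall>v\<in>V. nbrs V E v \<noteq> {} \<longrightarrow> has_unique_color \<phi> (nbrs V E v))"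

definition semi_pcf_coloring ::
  "'a set \<Rightarrow> ('a \<Rightarrow> 'a \<Rightarrow> bool) \<Rightarrow> 'a set \<Rightarrow> nat \<Rightarrow> ('a \<Rightarrow> nat) \<Rightarrow> bool" where
  "semi_pcf_coloring V E Y c \<phi> \<longleftrightarrow>
     (let V' = del_verts_V V Y; E' = del_verts_E E Y;
          Z = {u \<in> V'. deg V' E' u = 2}
      in proper_coloring V' E' c \<phi>
         \<and> (\<forall>u \<in> V' - (set_nbrs V E Y \<inter> Z). has_unique_color \<phi> (nbrs V' E' u)))"

end

theory Submission
  imports Defs
begin

definition pick :: "nat set \<Rightarrow> nat" where "pick S = (LEAST k. k \<notin> S)"

lemma pick_ex: assumes "finite (S::nat set)" shows "\<exists>k\<le>card S. k \<notin> S"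
proof (rule ccontr)
  assume "\<not> ?thesis"
  hence "{0..card S} \<subseteq> S" by auto
  hence "card {0..card S} \<le> card S" using assms card_mono by blast
  thus False by simp
qed

lemma pick_notin: "finite S \<Longrightarrow> pick S \<notin> S"
  unfolding pick_def using pick_ex by (metis LeastI)

lemma pick_lt: "finite S \<Longrightarrow> card S < c \<Longrightarrow> pick S < c"
proof -
  assume f: "finite S" and c: "card S < c"
  obtain k where "k \<le> card S" "k \<notin> S" using pick_ex[OF f] by blast
  hence "pick S \<le> card S" unfolding pick_def by (metis Least_le order_trans)
  thus ?thesis using c by simp
qed

lemma card4: "card {a,b,c,d::nat} \<le> 4"
proof -
  have "card {a,b,c,d} \<le> Suc (card {b,c,d})" by (rule card_insert_le_m1) auto
  moreover have "card {b,c,d} \<le> Suc (card {c,d})" by (rule card_insert_le_m1) auto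
  moreover have "card {c,d} \<le> 2" by (simp add: card_insert_if)
  ultimately show ?thesis by linarith
qed

lemma pick4: "(5::nat) \<le> c \<Longrightarrow> pick {a,b,d,e} < c \<and> pick {a,b,d,e} \<notin> {a,b,d,e}"
  using pick_lt[of "{a,b,d,e}" c] pick_notin[of "{a,b,d,e}"] card4[of a b d e] by simp

lemma nbrs_iff: "simple_graph V E \<Longrightarrow> u \<in> nbrs V E x \<longleftrightarrow> E x u"
  by (auto simp: simple_graph_def nbrs_def)

lemma finite_nbrs: "simple_graph V E \<Longrightarrow> finite (nbrs V E x)"
  by (auto simp: simple_graph_def nbrs_def)

lemma del_nbrs: "x \<notin> Y \<Longrightarrow> nbrs (del_verts_V V Y) (del_verts_E E Y) x = nbrs V E x - Y"
  by (auto simp: nbrs_def del_verts_V_def del_verts_E_def)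


theorem mainTheorem6:
  fixes V :: "'a set" and E :: "'a \<Rightarrow> 'a \<Rightarrow> bool" and c :: nat and v :: 'a and Y :: "'a set"
  assumes "c \<ge> 5"
    and "simple_graph V E"
    and "v \<in> V"
    and "\<exists>u \<in> nbrs V E v. deg V E u = 2"
    and "Y = {v} \<union> nbrs_deg V E 1 v \<union> nbrs_deg V E 2 v"
    and "\<not> (\<exists>\<phi>. pcf_coloring V E c \<phi>)"
    and "\<exists>\<phi>. semi_pcf_coloring V E Y c \<phi>"
  shows "2 * int (deg V E v) - 2 * int (card (nbrs_deg V E 1 v)) - int (card (nbrs_deg V E 2 v)) \<ge> int c"
proof (rule ccontr)
  assume neg: "\<not> ?thesis"
  have c5: "5 \<le> c" by fact
  have sg: "simple_graph V E" by fact
  have sym: "\<And>a b. E a b \<Longrightarrow> E b a" and irr: "\<And>a. \<not> E a a"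
    and inV: "\<And>a b. E a b \<Longrightarrow> a \<in> V \<and> b \<in> V" and finV: "finite V"
    using assms(2) unfolding simple_graph_def by blast+
  define N where "N = nbrs V E"
  have Niff: "\<And>x u. u \<in> N x \<longleftrightarrow> E x u" unfolding N_def using nbrs_iff[OF sg] by blast
  have finN: "\<And>x. finite (N x)" unfolding N_def using finite_nbrs[OF sg] by blast
  have degN: "\<And>x. deg V E x = card (N x)" unfolding N_def deg_def by simp
  obtain \<phi> where semi: "semi_pcf_coloring V E Y c \<phi>" using assms(7) by blast
  define V' where "V' = del_verts_V V Y"
  define E' where "E' = del_verts_E E Y"
  define Z where "Z = {u \<in> V'. deg V' E' u = 2}"
  have phiprop: "proper_coloring V' E' c \<phi>"
    and phiuniq: "\<And>u. u \<in> V' - (set_nbrs V E Y \<inter> Z) \<Longrightarrow> has_unique_color \<phi> (nbrs V' E' u)"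
    using semi unfolding semi_pcf_coloring_def Let_def V'_def E'_def Z_def by auto
  have V'eq: "V' = V - Y" unfolding V'_def del_verts_V_def by simp
  have N'eq: "\<And>x. x \<notin> Y \<Longrightarrow> nbrs V' E' x = N x - Y" unfolding V'_def E'_def N_def
    by (rule del_nbrs)
  have philt: "\<And>x. x \<in> V \<Longrightarrow> x \<notin> Y \<Longrightarrow> \<phi> x < c" using phiprop V'eq unfolding proper_coloring_def by blast
  have phiE: "\<And>x y. E x y \<Longrightarrow> x \<notin> Y \<Longrightarrow> y \<notin> Y \<Longrightarrow> \<phi> x \<noteq> \<phi> y"
    using phiprop V'eq inV unfolding proper_coloring_def E'_def del_verts_E_def by blast
  define N1 where "N1 = nbrs_deg V E 1 v"
  define N2 where "N2 = nbrs_deg V E 2 v"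
  have Yeq: "Y = {v} \<union> N1 \<union> N2" using assms(5) N1_def N2_def by simp
  have N1iff: "\<And>u. u \<in> N1 \<longleftrightarrow> E v u \<and> card (N u) = 1"
    unfolding N1_def nbrs_deg_def using Niff degN N_def by auto
  have N2iff: "\<And>u. u \<in> N2 \<longleftrightarrow> E v u \<and> card (N u) = 2"
    unfolding N2_def nbrs_deg_def using Niff degN N_def by auto
  have vnotN: "v \<notin> N v" using Niff irr by blast
  have N1N: "\<And>u. u \<in> N1 \<Longrightarrow> N u = {v}"
  proof -
    fix u assume u: "u \<in> N1"
    hence "card (N u) = 1" "v \<in> N u" using N1iff Niff sym by auto
    thus "N u = {v}" by (metis card_1_singletonE singletonD)
  qed
  define wof where "wof u = (SOME w. w \<in> N u \<and> w \<noteq> v)" for u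
  have N2N: "\<And>u. u \<in> N2 \<Longrightarrow> N u = {v, wof u} \<and> wof u \<noteq> v"
  proof -
    fix u assume u: "u \<in> N2"
    hence c2: "card (N u) = 2" and vin: "v \<in> N u" using N2iff Niff sym by auto
    then obtain a b where ab: "N u = {a,b}" "a \<noteq> b" by (meson card_2_iff)
    hence ex: "\<exists>w. w \<in> N u \<and> w \<noteq> v" by blast
    hence w: "wof u \<in> N u \<and> wof u \<noteq> v" unfolding wof_def by (rule someI_ex)
    show "N u = {v, wof u} \<and> wof u \<noteq> v" using ab vin w by auto
  qed
  have N12: "N1 \<inter> N2 = {}" using N1iff N2iff by auto
  have vN12: "v \<notin> N1" "v \<notin> N2" using N1iff N2iff irr by auto
  have N12sub: "N1 \<subseteq> N v" "N2 \<subseteq> N v" using N1iff N2iff Niff by auto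
  define R where "R = N v - Y"
  have Req: "R = N v - (N1 \<union> N2)" unfolding R_def Yeq using vnotN by auto
  have finR: "finite R" "finite N1" "finite N2" using finN N12sub Req by (auto intro: finite_subset)
  have cardR: "card R + card N1 + card N2 = card (N v)"
  proof -
    have "card (N1 \<union> N2) = card N1 + card N2" using N12 finR card_Un_disjoint by blast
    moreover have "card R = card (N v) - card (N1 \<union> N2)" unfolding Req
      by (rule card_Diff_subset) (use finR N12sub in auto)
    moreover have "card (N1 \<union> N2) \<le> card (N v)" using N12sub finN card_mono by (metis Un_subset_iff)
    ultimately show ?thesis by linarith
  qed
  have key: "2 * card R + card N2 < c"
  proof -
    have "2 * int (card (N v)) - 2 * int (card N1) - int (card N2) < int c"
      using neg degN N1_def N2_def by simp
    thus ?thesis using cardR by linarith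
  qed
  have Ynb: "\<And>x y. E x y \<Longrightarrow> x \<notin> Y \<Longrightarrow> y \<in> Y \<Longrightarrow> y = v \<or> (y \<in> N2 \<and> wof y = x)"
  proof -
    fix x y assume xy: "E x y" "x \<notin> Y" "y \<in> Y"
    have xv: "x \<noteq> v" using xy Yeq by auto
    have xNy: "x \<in> N y" using Niff sym xy by blast
    show "y = v \<or> (y \<in> N2 \<and> wof y = x)"
    proof (cases "y = v")
      case False
      hence "y \<in> N1 \<or> y \<in> N2" using xy Yeq by auto
      moreover have "y \<notin> N1" using N1N xNy xv by blast
      ultimately have "y \<in> N2" by blast
      thus ?thesis using N2N xNy xv by blast
    qed simp
  qed
  obtain u0 where u0: "u0 \<in> N2" using assms(4) N2iff Niff degN N_def by auto
  define bad where "bad x = (\<not> has_unique_color \<phi> (nbrs V' E' x))" for x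
  define tau where "tau x = (if bad x then \<phi> (SOME a. a \<in> nbrs V' E' x)
      else (SOME col. card {u \<in> nbrs V' E' x. \<phi> u = col} = 1))" for x
  have goodfact: "\<And>x. \<not> bad x \<Longrightarrow> card {u \<in> nbrs V' E' x. \<phi> u = tau x} = 1"
  proof -
    fix x assume "\<not> bad x"
    hence "\<exists>col. card {u \<in> nbrs V' E' x. \<phi> u = col} = 1" unfolding bad_def has_unique_color_def by blast
    hence "card {u \<in> nbrs V' E' x. \<phi> u = (SOME col. card {u \<in> nbrs V' E' x. \<phi> u = col} = 1)} = 1"
      by (rule someI_ex)
    thus "card {u \<in> nbrs V' E' x. \<phi> u = tau x} = 1" using \<open>\<not> bad x\<close> unfolding tau_def by simp
  qed
  have badfact: "\<And>x y. x \<in> V \<Longrightarrow> x \<notin> Y \<Longrightarrow> bad x \<Longrightarrow> y \<in> nbrs V' E' x \<Longrightarrow> \<phi> y = tau x"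
  proof -
    fix x y assume x: "x \<in> V" "x \<notin> Y" "bad x" and y: "y \<in> nbrs V' E' x"
    have "x \<in> set_nbrs V E Y \<inter> Z" using phiuniq x V'eq bad_def by blast
    hence "deg V' E' x = 2" unfolding Z_def by blast
    then obtain a b where ab: "nbrs V' E' x = {a,b}" "a \<noteq> b" unfolding deg_def by (meson card_2_iff)
    have "\<phi> a = \<phi> b"
    proof (rule ccontr)
      assume "\<phi> a \<noteq> \<phi> b"
      hence "{u \<in> nbrs V' E' x. \<phi> u = \<phi> a} = {a}" using ab by auto
      thus False using x(3) unfolding bad_def has_unique_color_def by (metis is_singleton_altdef is_singleton_def)
    qed
    moreover have "(SOME a. a \<in> nbrs V' E' x) \<in> {a,b}" using ab by (metis insertI1 someI)
    ultimately show "\<phi> y = tau x" using y ab x(3) unfolding tau_def by auto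
  qed
  define W where "W = wof ` {u \<in> N2. wof u \<notin> Y}"
  define FA where "FA = \<phi> ` R \<union> tau ` R \<union> \<phi> ` W"
  define al where "al = pick FA"
  have finW: "finite W" unfolding W_def using finR by auto
  have finFA: "finite FA" unfolding FA_def using finR finW by auto
  have cardFA: "card FA < c"
  proof -
    have "card W \<le> card {u \<in> N2. wof u \<notin> Y}" unfolding W_def by (rule card_image_le) (use finR in auto)
    moreover have "card {u \<in> N2. wof u \<notin> Y} \<le> card N2" by (rule card_mono) (use finR in auto)
    moreover have "card FA \<le> card (\<phi> ` R \<union> tau ` R) + card (\<phi> ` W)"
      unfolding FA_def by (rule card_Un_le)
    moreover have "card (\<phi> ` R \<union> tau ` R) \<le> card (\<phi> ` R) + card (tau ` R)" by (rule card_Un_le)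
    moreover have "card (\<phi> ` R) \<le> card R" "card (tau ` R) \<le> card R" "card (\<phi> ` W) \<le> card W"
      using card_image_le finR finW by auto
    ultimately show ?thesis using key by linarith
  qed
  have al: "al \<notin> FA" "al < c" unfolding al_def using pick_notin pick_lt finFA cardFA by auto
  define w0 where "w0 = wof u0"
  define FD where "FD = insert al (insert (\<phi> w0) (insert (tau w0) (\<phi> ` R)))"
  define de where "de = pick FD"
  have finFD: "finite FD" unfolding FD_def using finR by auto
  have cardFD: "card FD < c"
  proof -
    have "card FD \<le> Suc (card (insert (\<phi> w0) (insert (tau w0) (\<phi> ` R))))" unfolding FD_def
      by (rule card_insert_le_m1) (use finR in auto)
    moreover have "card (insert (\<phi> w0) (insert (tau w0) (\<phi> ` R))) \<le> Suc (card (insert (tau w0) (\<phi> ` R)))"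
      by (rule card_insert_le_m1) (use finR in auto)
    moreover have "card (insert (tau w0) (\<phi> ` R)) \<le> Suc (card (\<phi> ` R))"
      by (rule card_insert_le_m1) (use finR in auto)
    moreover have "card (\<phi> ` R) \<le> card R" using card_image_le finR by auto
    moreover have "1 \<le> card N2" using u0 finR(3) by (metis One_nat_def Suc_leI card_gt_0_iff empty_iff)
    ultimately show ?thesis using key c5 by linarith
  qed
  have de: "de \<notin> FD" "de < c" unfolding de_def using pick_notin pick_lt finFD cardFD by auto
  define p where "p = pick {al, de, de, de}"
  define q where "q = pick {al, de, p, p}"
  have p: "p < c" "p \<noteq> al" "p \<noteq> de" using pick4[OF c5, of al de de de] p_def by auto
  have q: "q < c" "q \<noteq> al" "q \<noteq> de" "q \<noteq> p" using pick4[OF c5, of al de p p] q_def by auto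
  define h where "h u = (SOME x. x \<in> {u, wof u})" for u
  define U where "U w = {u \<in> N2. wof u = w}" for w
  define ustar where "ustar w = (if u0 \<in> U w then u0 else (SOME u. u \<in> U w))" for w
  define g where "g u = pick {al, de, \<phi> (wof u), tau (wof u)}" for u
  define psi where "psi x = (if x = v then al else if x \<in> N1 then p else if x = u0 then de
      else if x \<in> N2 then (if wof x \<in> N2 then (if h x = x then p else q)
           else if bad (wof x) \<and> wof x \<notin> R \<and> x \<noteq> ustar (wof x)
             then pick {al, de, \<phi> (wof x), g (ustar (wof x))}
           else g x)
      else \<phi> x)" for x
  have u0Y: "u0 \<in> Y" "u0 \<noteq> v" "u0 \<notin> N1" using u0 Yeq vN12 N12 by auto
  have psi_out: "\<And>x. x \<notin> Y \<Longrightarrow> psi x = \<phi> x" unfolding psi_def using Yeq u0Y by auto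
  have psi_v: "psi v = al" unfolding psi_def by simp
  have psi_N1: "\<And>x. x \<in> N1 \<Longrightarrow> psi x = p" unfolding psi_def using vN12 by auto
  have psi_u0: "psi u0 = de" unfolding psi_def using u0Y by auto
  have Ewof: "\<And>u. u \<in> N2 \<Longrightarrow> E u (wof u)" using N2N Niff by blast
  have wofwof: "\<And>u. u \<in> N2 \<Longrightarrow> wof u \<in> N2 \<Longrightarrow> wof (wof u) = u"
  proof -
    fix u assume u: "u \<in> N2" "wof u \<in> N2"
    have "u \<in> N (wof u)" using Ewof[OF u(1)] sym Niff by blast
    moreover have "u \<noteq> v" using u vN12 by auto
    ultimately show "wof (wof u) = u" using N2N[OF u(2)] by auto
  qed
  have wofY: "\<And>u. u \<in> N2 \<Longrightarrow> wof u \<in> Y \<Longrightarrow> wof u \<in> N2"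
  proof -
    fix u assume u: "u \<in> N2" "wof u \<in> Y"
    have "u \<in> N (wof u)" using Ewof[OF u(1)] sym Niff by blast
    moreover have "u \<noteq> v" using u vN12 by auto
    ultimately have "wof u \<notin> N1" using N1N by blast
    thus "wof u \<in> N2" using u N2N Yeq by auto
  qed
  have deFD: "de \<noteq> al" "de \<noteq> \<phi> w0" "de \<noteq> tau w0" "\<And>x. x \<in> R \<Longrightarrow> de \<noteq> \<phi> x"
    using de(1) unfolding FD_def by auto
  have F2: "\<And>u. u \<in> N2 \<Longrightarrow> psi u < c \<and> psi u \<noteq> al \<and> (u \<noteq> u0 \<longrightarrow> psi u \<noteq> de)
      \<and> (wof u \<notin> Y \<longrightarrow> psi u \<noteq> \<phi> (wof u)) \<and> (wof u \<notin> Y \<and> \<not> bad (wof u) \<longrightarrow> psi u \<noteq> tau (wof u))"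
  proof -
    fix u assume u: "u \<in> N2"
    show "?thesis u"
    proof (cases "u = u0")
      case True
      thus ?thesis using psi_u0 de deFD w0_def by auto
    next
      case False
      have uv: "u \<noteq> v" "u \<notin> N1" using u vN12 N12 by auto
      show ?thesis
      proof (cases "wof u \<in> N2")
        case True
        hence "psi u = p \<or> psi u = q" unfolding psi_def using uv False u by auto
        thus ?thesis using p q True Yeq by auto
      next
        case nN2: False
        have A: "pick {al, de, \<phi> (wof u), tau (wof u)} < c \<and> pick {al, de, \<phi> (wof u), tau (wof u)} \<notin> {al, de, \<phi> (wof u), tau (wof u)}"
          by (rule pick4[OF c5])
        have B: "pick {al, de, \<phi> (wof u), g (ustar (wof u))} < c \<and> pick {al, de, \<phi> (wof u), g (ustar (wof u))} \<notin> {al, de, \<phi> (wof u), g (ustar (wof u))}"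
          by (rule pick4[OF c5])
        show ?thesis
        proof (cases "bad (wof u) \<and> wof u \<notin> R \<and> u \<noteq> ustar (wof u)")
          case True
          hence "psi u = pick {al, de, \<phi> (wof u), g (ustar (wof u))}" unfolding psi_def using uv False u nN2 by auto
          thus ?thesis using B True by auto
        next
          case F3: False
          hence "psi u = g u" unfolding psi_def using uv False u nN2 by auto
          thus ?thesis using A F3 unfolding g_def by auto
        qed
      qed
    qed
  qed
  have tri: "\<And>u. u \<in> N2 \<Longrightarrow> wof u \<in> N2 \<Longrightarrow> psi u \<noteq> psi (wof u)"
  proof -
    fix u assume u: "u \<in> N2" "wof u \<in> N2"
    define w where "w = wof u"
    have ww: "wof w = u" using wofwof u w_def by simp
    have uw: "u \<noteq> w" using Ewof[OF u(1)] irr w_def by auto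
    have se: "{w, wof w} = {u, wof u}" using ww w_def by auto
    have hh: "h u = h w" unfolding h_def se ..
    have hin: "h u \<in> {u, w}" unfolding h_def w_def by (rule someI[of _ u]) simp
    have nv: "u \<noteq> v" "u \<notin> N1" "w \<noteq> v" "w \<notin> N1" using u vN12 N12 w_def by auto
    have pu: "u \<noteq> u0 \<Longrightarrow> psi u = (if h u = u then p else q)" unfolding psi_def using nv u w_def by auto
    have pw: "w \<noteq> u0 \<Longrightarrow> psi w = (if h w = w then p else q)" unfolding psi_def using nv u w_def ww by auto
    show "psi u \<noteq> psi (wof u)"
      using pu pw hh hin uw psi_u0 p q unfolding w_def[symmetric] by (cases "u = u0"; cases "w = u0"; auto)
  qed
  have Uustar: "\<And>x. U x \<noteq> {} \<Longrightarrow> ustar x \<in> U x"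
    unfolding ustar_def by (auto intro: someI)
  have badU: "\<And>x. x \<notin> Y \<Longrightarrow> x \<notin> R \<Longrightarrow> bad x \<Longrightarrow> U x \<noteq> {} \<Longrightarrow>
      psi (ustar x) \<noteq> tau x \<and> (\<forall>u \<in> U x. u \<noteq> ustar x \<longrightarrow> psi u \<noteq> psi (ustar x))"
  proof -
    fix x assume x: "x \<notin> Y" "x \<notin> R" "bad x" "U x \<noteq> {}"
    define us where "us = ustar x"
    have us: "us \<in> N2" "wof us = x" using Uustar[OF x(4)] unfolding us_def U_def by auto
    have xN2: "x \<notin> N2" using x Yeq by auto
    have pus: "psi us = (if us = u0 then de else g us)"
      unfolding psi_def using us vN12 N12 xN2 us_def by auto
    have A: "pick {al, de, \<phi> x, tau x} < c \<and> pick {al, de, \<phi> x, tau x} \<notin> {al, de, \<phi> x, tau x}"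
      by (rule pick4[OF c5])
    have t1: "psi us \<noteq> tau x" using pus deFD w0_def us A unfolding g_def by auto
    have t2: "psi u \<noteq> psi us" if uU: "u \<in> U x" "u \<noteq> us" for u
    proof -
      have uu: "u \<in> N2" "wof u = x" using uU U_def by auto
      have "u \<noteq> u0" using uU us_def ustar_def by auto
      hence "psi u = pick {al, de, \<phi> x, g us}" unfolding psi_def using uu vN12 N12 xN2 x uU us_def by auto
      moreover have "pick {al, de, \<phi> x, g us} \<notin> {al, de, \<phi> x, g us}" using pick4[OF c5] by blast
      ultimately show ?thesis using pus by auto
    qed
    show "psi (ustar x) \<noteq> tau x \<and> (\<forall>u \<in> U x. u \<noteq> ustar x \<longrightarrow> psi u \<noteq> psi (ustar x))"
      using t1 t2 us_def by auto
  qed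
  have alR: "\<And>x. x \<in> R \<Longrightarrow> al \<noteq> \<phi> x \<and> al \<noteq> tau x" using al(1) unfolding FA_def by auto
  have alW: "\<And>u. u \<in> N2 \<Longrightarrow> wof u \<notin> Y \<Longrightarrow> al \<noteq> \<phi> (wof u)" using al(1) unfolding FA_def W_def by auto
  have Rin: "\<And>x. E v x \<Longrightarrow> x \<notin> Y \<Longrightarrow> x \<in> R" unfolding R_def using Niff by auto
  have psilt: "\<And>x. x \<in> V \<Longrightarrow> psi x < c"
  proof -
    fix x assume x: "x \<in> V"
    show "psi x < c"
    proof (cases "x \<in> Y")
      case True
      hence "x = v \<or> x \<in> N1 \<or> x \<in> N2" using Yeq by auto
      thus ?thesis using psi_v al psi_N1 p F2 by auto
    qed (use psi_out philt x in auto)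
  qed
  have edgeY: "\<And>x y. E x y \<Longrightarrow> x \<in> Y \<Longrightarrow> psi x \<noteq> psi y"
  proof -
    fix x y assume xy: "E x y" "x \<in> Y"
    hence "x = v \<or> x \<in> N1 \<or> x \<in> N2" using Yeq by auto
    moreover {
      assume xv: "x = v"
      have "y \<noteq> v" using xy xv irr by auto
      hence "y \<in> N1 \<or> y \<in> N2 \<or> y \<notin> Y" using Yeq by auto
      moreover have "y \<in> N1 \<Longrightarrow> psi x \<noteq> psi y" using xv psi_v psi_N1 p by auto
      moreover have "y \<in> N2 \<Longrightarrow> psi x \<noteq> psi y" using xv psi_v F2[of y] by auto
      moreover have "y \<notin> Y \<Longrightarrow> psi x \<noteq> psi y" using xv psi_v psi_out alR Rin xy by metis
      ultimately have "psi x \<noteq> psi y" by blast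
    }
    moreover {
      assume x1: "x \<in> N1"
      hence "y = v" using N1N Niff xy by blast
      hence "psi x \<noteq> psi y" using x1 psi_N1 psi_v p by auto
    }
    moreover {
      assume x2: "x \<in> N2"
      hence "y = v \<or> y = wof x" using N2N Niff xy by blast
      moreover have "y = v \<Longrightarrow> psi x \<noteq> psi y" using F2[OF x2] psi_v by auto
      moreover have "y = wof x \<Longrightarrow> y \<in> Y \<Longrightarrow> psi x \<noteq> psi y" using tri wofY x2 by auto
      moreover have "y = wof x \<Longrightarrow> y \<notin> Y \<Longrightarrow> psi x \<noteq> psi y" using F2[OF x2] psi_out by auto
      ultimately have "psi x \<noteq> psi y" by blast
    }
    ultimately show "psi x \<noteq> psi y" by blast
  qed
  have edge: "\<And>x y. E x y \<Longrightarrow> psi x \<noteq> psi y"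
  proof -
    fix x y assume xy: "E x y"
    show "psi x \<noteq> psi y"
    proof (cases "x \<in> Y \<or> y \<in> Y")
      case True
      thus ?thesis using edgeY xy sym by metis
    next
      case False
      thus ?thesis using psi_out phiE xy by auto
    qed
  qed
  have uniq: "\<And>x. x \<in> V \<Longrightarrow> N x \<noteq> {} \<Longrightarrow> has_unique_color psi (N x)"
  proof -
    fix x assume x: "x \<in> V" "N x \<noteq> {}"
    show "has_unique_color psi (N x)"
    proof (cases "x \<in> Y")
      case True
      hence "x = v \<or> x \<in> N1 \<or> x \<in> N2" using Yeq by auto
      moreover {
        assume xv: "x = v"
        have "{u \<in> N v. psi u = de} = {u0}"
        proof (intro equalityI subsetI)
          fix u assume u: "u \<in> {u \<in> N v. psi u = de}"
          hence "u \<in> N1 \<or> u \<in> N2 \<or> u \<notin> Y" using Yeq vnotN by auto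
          moreover have "u \<in> N1 \<Longrightarrow> False" using u psi_N1 p by auto
          moreover have "u \<notin> Y \<Longrightarrow> False" using u psi_out deFD(4) R_def by auto
          moreover have "u \<in> N2 \<Longrightarrow> u = u0" using u F2 by auto
          ultimately show "u \<in> {u0}" by blast
        qed (use u0 N12sub psi_u0 in auto)
        hence "has_unique_color psi (N x)" unfolding has_unique_color_def xv by (metis is_singleton_altdef is_singleton_def)
      }
      moreover {
        assume x1: "x \<in> N1"
        have "{u \<in> N x. psi u = al} = {v}" using N1N[OF x1] psi_v by auto
        hence "has_unique_color psi (N x)" unfolding has_unique_color_def by (metis is_singleton_altdef is_singleton_def)
      }
      moreover {
        assume x2: "x \<in> N2"
        have "psi (wof x) \<noteq> al"
        proof (cases "wof x \<in> Y")
          case True thus ?thesis using wofY x2 F2 by auto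
        next
          case False thus ?thesis using psi_out alW x2 by auto
        qed
        hence "{u \<in> N x. psi u = al} = {v}" using N2N[OF x2] psi_v by auto
        hence "has_unique_color psi (N x)" unfolding has_unique_color_def by (metis is_singleton_altdef is_singleton_def)
      }
      ultimately show ?thesis by blast
    next
      case xY: False
      have N'x: "nbrs V' E' x = N x - Y" using N'eq xY by blast
      have Ynx: "\<And>u. u \<in> N x \<Longrightarrow> u \<in> Y \<Longrightarrow> u = v \<or> (u \<in> N2 \<and> wof u = x)"
        using Ynb Niff xY by blast
      show ?thesis
      proof (cases "N x \<inter> Y = {}")
        case True
        have "x \<notin> set_nbrs V E Y"
        proof
          assume "x \<in> set_nbrs V E Y"
          then obtain y where "y \<in> Y" "E y x" unfolding set_nbrs_def using nbrs_iff[OF sg] by blast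
          thus False using True Niff sym by blast
        qed
        hence "has_unique_color \<phi> (nbrs V' E' x)" using phiuniq x xY V'eq by blast
        then obtain col where "card {u \<in> nbrs V' E' x. \<phi> u = col} = 1" unfolding has_unique_color_def by blast
        moreover have "\<forall>u\<in>N x. psi u = \<phi> u \<and> u \<notin> Y" using True psi_out by blast
        hence "{u \<in> nbrs V' E' x. \<phi> u = col} = {u \<in> N x. psi u = col}"
          using N'x by auto
        ultimately show ?thesis unfolding has_unique_color_def by metis
      next
        case nonempty: False
        show ?thesis
        proof (cases "bad x")
          case False
          have "{u \<in> nbrs V' E' x. \<phi> u = tau x} = {u \<in> N x. psi u = tau x}"
          proof (intro equalityI subsetI)
            fix u assume u: "u \<in> {u \<in> N x. psi u = tau x}"
            show "u \<in> {u \<in> nbrs V' E' x. \<phi> u = tau x}"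
            proof (cases "u \<in> Y")
              case True
              hence "u = v \<or> (u \<in> N2 \<and> wof u = x)" using Ynx u by blast
              moreover have "u = v \<Longrightarrow> False" using u Rin Niff sym xY psi_v alR by blast
              moreover have "u \<in> N2 \<and> wof u = x \<Longrightarrow> False" using u F2 xY False by auto
              ultimately show ?thesis by blast
            qed (use u N'x psi_out in auto)
          qed (use N'x psi_out in auto)
          thus ?thesis using goodfact[OF False] unfolding has_unique_color_def by metis
        next
          case bx: True
          show ?thesis
          proof (cases "x \<in> R")
            case True
            have vx: "v \<in> N x" using True R_def Niff sym by auto
            have "{u \<in> N x. psi u = al} = {v}"
            proof (intro equalityI subsetI)
              fix u assume u: "u \<in> {u \<in> N x. psi u = al}"
              show "u \<in> {v}"
              proof (cases "u \<in> Y")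
                case True
                hence "u = v \<or> (u \<in> N2 \<and> wof u = x)" using Ynx u by blast
                thus ?thesis using F2 u by auto
              next
                case False
                hence "u \<in> nbrs V' E' x" using u N'x by auto
                hence "\<phi> u = tau x" using badfact x xY bx by blast
                thus ?thesis using u False psi_out alR[OF True] by auto
              qed
            qed (use vx psi_v in auto)
            thus ?thesis unfolding has_unique_color_def by (metis is_singleton_altdef is_singleton_def)
          next
            case xR: False
            have vx: "v \<notin> N x" using xR Rin Niff sym xY by blast
            have "U x \<noteq> {}" using nonempty Ynx vx U_def by blast
            note B = badU[OF xY xR bx this] Uustar[OF this]
            have "ustar x \<in> N2" "wof (ustar x) = x" using B U_def by auto
            hence usx: "ustar x \<in> N x" using Ewof[of "ustar x"] sym Niff by metis
            have "{u \<in> N x. psi u = psi (ustar x)} = {ustar x}"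
            proof (intro equalityI subsetI)
              fix u assume u: "u \<in> {u \<in> N x. psi u = psi (ustar x)}"
              show "u \<in> {ustar x}"
              proof (cases "u \<in> Y")
                case True
                hence "u \<in> U x" using Ynx u vx U_def by blast
                thus ?thesis using B u by auto
              next
                case False
                hence "u \<in> nbrs V' E' x" using u N'x by auto
                hence "\<phi> u = tau x" using badfact x xY bx by blast
                thus ?thesis using u False psi_out B by auto
              qed
            qed (use usx in auto)
            thus ?thesis unfolding has_unique_color_def by (metis is_singleton_altdef is_singleton_def)
          qed
        qed
      qed
    qed
  qed
  have "pcf_coloring V E c psi"
    unfolding pcf_coloring_def proper_coloring_def
    using psilt edge uniq N_def by auto
  thus False using assms(6) by blast
qed
end
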